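(* Let $n\ge 2$, $p\ge 1$, and let ${\bf x}=(x_1,\dots,x_n)\in\mathbb{R}^n$. Let $m$ be the median location, i.e. $m=x_{[k]}$ where $k=\lceil n/2\rceil$ (so $n=2k-1$ or $n=2k$) and $x_{[k]}$ denotes the $k$-th largest component of ${\bf x}$. Then $$\Big(\sum_{i=1}^n|m-x_i|^p\Big)^{1/p}\;\le\;2^{1-\frac1p}\,\min_{y\in\mathbb{R}}\Big(\sum_{i=1}^n|y-x_i|^p\Big)^{1/p}.$$
   Context: The social cost of locating a facility at $y\in\mathbb{R}$ for a location profile ${\bf x}=(x_1,\dots,x_n)$ is $sc({\bf x},y)=\big(\sum_{i=1}^n|x_i-y|^p\big)^{1/p}$. The median mechanism maps ${\bf x}$ to $m$ as defined in the claim. *)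

theory Defs
  imports "HOL-Analysis.Analysis"
begin

definition social_cost :: "nat \<Rightarrow> real \<Rightarrow> (nat \<Rightarrow> real) \<Rightarrow> real \<Rightarrow> real" where
  "social_cost n p x y = (\<Sum>i<n. \<bar>x i - y\<bar> powr p) powr (1 / p)"

definition kth_largest :: "nat \<Rightarrow> (nat \<Rightarrow> real) \<Rightarrow> nat \<Rightarrow> real" where
  "kth_largest n x k = rev (sort (map x [0..<n])) ! (k - 1)"

definition median_loc :: "nat \<Rightarrow> (nat \<Rightarrow> real) \<Rightarrow> real" where
  "median_loc n x = kth_largest n x (nat \<lceil>real n / 2\<rceil>)"

end

theory Submission
  imports Defs
begin

lemma powr_sum_le:
  fixes a b p :: real
  assumes "a \<ge> 0" "b \<ge> 0" "p \<ge> 1"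
  shows "(a + b) powr p \<le> 2 powr (p - 1) * (a powr p + b powr p)"
proof (cases "a > 0 \<and> b > 0")
  case True
  have "convex_on {0<..} (\<lambda>x::real. x powr p)" using powr_convex assms(3) by blast
  from convex_onD[OF this, of "1/2" a b] True
  have "((1 - 1/2) * a + 1/2 * b) powr p \<le> (1 - 1/2) * a powr p + 1/2 * b powr p" by simp
  hence h: "((a + b) / 2) powr p \<le> (a powr p + b powr p) / 2" by (simp add: field_simps)
  have "(a + b) powr p = (2 * ((a + b) / 2)) powr p" by (rule arg_cong[where f="\<lambda>t. t powr p"]) simp
  also have "\<dots> = 2 powr p * ((a + b) / 2) powr p"
    using assms by (intro powr_mult) 
  also have "\<dots> \<le> 2 powr p * ((a powr p + b powr p) / 2)"
    using h by (intro mult_left_mono) auto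
  also have "\<dots> = 2 powr (p - 1) * (a powr p + b powr p)"
    by (simp add: powr_diff)
  finally show ?thesis .
next
  case False
  have g: "2 powr (p - 1) \<ge> (1::real)" using assms by (intro ge_one_powr_ge_zero) auto
  from False assms have "a = 0 \<or> b = 0" by auto
  thus ?thesis
  proof
    assume "a = 0"
    thus ?thesis using g assms by (simp add: mult_le_cancel_right1 order.trans[OF _ mult_right_mono[OF g]])
  next
    assume "b = 0"
    thus ?thesis using g assms by (simp add: order.trans[OF _ mult_right_mono[OF g]])
  qed
qed

lemma powr_superadd:
  fixes a b p :: real
  assumes "a \<ge> 0" "b \<ge> 0" "p \<ge> 1"
  shows "a powr p + b powr p \<le> (a + b) powr p"
proof (cases "a + b = 0")
  case True hence "a = 0" "b = 0" using assms by auto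
  thus ?thesis using assms by simp
next
  case False
  hence ab: "a + b > 0" using assms by simp
  have 1: "a powr p \<le> a * (a + b) powr (p - 1)"
  proof (cases "a = 0")
    case True thus ?thesis using assms by simp
  next
    case False
    hence "a powr p = a * a powr (p - 1)" using assms by (simp add: powr_diff)
    also have "\<dots> \<le> a * (a + b) powr (p - 1)"
      using assms False by (intro mult_left_mono powr_mono2) auto
    finally show ?thesis .
  qed
  have 2: "b powr p \<le> b * (a + b) powr (p - 1)"
  proof (cases "b = 0")
    case True thus ?thesis using assms by simp
  next
    case False
    hence "b powr p = b * b powr (p - 1)" using assms by (simp add: powr_diff)
    also have "\<dots> \<le> b * (a + b) powr (p - 1)"
      using assms False by (intro mult_left_mono powr_mono2) auto
    finally show ?thesis .
  qed
  have "(a + b) * (a + b) powr (p - 1) = (a + b) powr p"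
    using ab by (simp add: powr_diff)
  thus ?thesis using 1 2 by (simp add: distrib_right)
qed

lemma key:
  fixes x :: "nat \<Rightarrow> real" and m y p :: real
  assumes p: "p \<ge> 1"
    and cardle: "card {i\<in>{..<n}. (x i - m) * (y - m) > 0} \<le> card {i\<in>{..<n}. (x i - m) * (y - m) \<le> 0}"
  shows "(\<Sum>i<n. \<bar>x i - m\<bar> powr p) \<le> 2 powr (p - 1) * (\<Sum>i<n. \<bar>x i - y\<bar> powr p)"
proof -
  define c where "c = (2::real) powr (p - 1)"
  define D where "D = c * \<bar>y - m\<bar> powr p"
  define B where "B = {i\<in>{..<n}. (x i - m) * (y - m) > 0}"
  define C where "C = {i\<in>{..<n}. (x i - m) * (y - m) \<le> 0}"
  define g where "g i = (if i \<in> B then D else - D)" for i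
  have c1: "c \<ge> 1" unfolding c_def using p by (intro ge_one_powr_ge_zero) auto
  have D0: "D \<ge> 0" unfolding D_def using c1 by simp
  have pt: "\<bar>x i - m\<bar> powr p \<le> c * \<bar>x i - y\<bar> powr p + g i" if "i < n" for i
  proof (cases "i \<in> B")
    case True
    have "\<bar>x i - m\<bar> powr p \<le> (\<bar>x i - y\<bar> + \<bar>y - m\<bar>) powr p"
      using p by (intro powr_mono2) auto
    also have "\<dots> \<le> c * (\<bar>x i - y\<bar> powr p + \<bar>y - m\<bar> powr p)"
      unfolding c_def using p by (intro powr_sum_le) auto
    finally show ?thesis using True by (simp add: g_def D_def algebra_simps)
  next
    case False
    hence "(x i - m) * (y - m) \<le> 0" using that unfolding B_def by auto
    hence eq: "\<bar>x i - y\<bar> = \<bar>x i - m\<bar> + \<bar>y - m\<bar>"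
      by (cases "x i \<le> m"; cases "y \<le> m") (auto simp: mult_le_0_iff)
    have "\<bar>x i - m\<bar> powr p + D \<le> c * (\<bar>x i - m\<bar> powr p + \<bar>y - m\<bar> powr p)"
      unfolding D_def using c1 mult_right_mono[OF c1, of "\<bar>x i - m\<bar> powr p"] by (simp add: algebra_simps)
    also have "\<dots> \<le> c * \<bar>x i - y\<bar> powr p"
      unfolding eq using c1 p by (intro mult_left_mono powr_superadd) auto
    finally show ?thesis using False by (simp add: g_def)
  qed
  have U: "{..<n} = B \<union> C" "B \<inter> C = {}" unfolding B_def C_def by auto
  have "(\<Sum>i<n. g i) = (\<Sum>i\<in>B. g i) + (\<Sum>i\<in>C. g i)"
    unfolding U(1) by (rule sum.union_disjoint) (auto simp: B_def C_def)
  also have "\<dots> = D * card B - D * card C"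
  proof -
    have "(\<Sum>i\<in>C. g i) = (\<Sum>i\<in>C. - D)"
      using U(2) by (intro sum.cong) (auto simp: g_def)
    moreover have "(\<Sum>i\<in>B. g i) = (\<Sum>i\<in>B. D)"
      by (intro sum.cong) (auto simp: g_def)
    ultimately show ?thesis by simp
  qed
  also have "\<dots> \<le> 0" using cardle D0 unfolding B_def C_def
    by (simp add: mult_left_mono)
  finally have g0: "(\<Sum>i<n. g i) \<le> 0" .
  have "(\<Sum>i<n. \<bar>x i - m\<bar> powr p) \<le> (\<Sum>i<n. c * \<bar>x i - y\<bar> powr p + g i)"
    using pt by (intro sum_mono) auto
  also have "\<dots> = c * (\<Sum>i<n. \<bar>x i - y\<bar> powr p) + (\<Sum>i<n. g i)"
    by (simp add: sum.distrib sum_distrib_left)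
  finally show ?thesis using g0 unfolding c_def by linarith
qed

lemma length_filter_sort: "length (filter P (sort xs)) = length (filter P xs)"
  by (metis mset_filter mset_sort size_mset)

lemma card_filter_eq:
  fixes x :: "nat \<Rightarrow> real"
  shows "card {i\<in>{..<n}. P (x i)} = card {i. i < n \<and> P (sort (map x [0..<n]) ! i)}"
proof -
  have "card {i\<in>{..<n}. P (x i)} = length (filter P (map x [0..<n]))"
    by (simp add: length_filter_conv_card cong: conj_cong)
  also have "\<dots> = length (filter P (sort (map x [0..<n])))" by (simp add: length_filter_sort)
  also have "\<dots> = card {i. i < n \<and> P (sort (map x [0..<n]) ! i)}"
    by (simp add: length_filter_conv_card)
  finally show ?thesis .
qed

lemma median_counts:
  fixes x :: "nat \<Rightarrow> real"
  assumes k1: "1 \<le> k" and kn: "k \<le> n"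
  defines "m \<equiv> kth_largest n x k"
  shows "card {i\<in>{..<n}. x i < m} \<le> n - k"
    and "card {i\<in>{..<n}. x i > m} \<le> k - 1"
proof -
  define xs where "xs = sort (map x [0..<n])"
  have len: "length xs = n" by (simp add: xs_def)
  have sxs: "sorted xs" by (simp add: xs_def)
  have mj: "m = xs ! (n - k)"
    unfolding m_def kth_largest_def xs_def[symmetric] using k1 kn len
    by (simp add: rev_nth)
  have "card {i\<in>{..<n}. x i < m} = card {i. i < n \<and> xs ! i < m}"
    unfolding xs_def by (rule card_filter_eq)
  also have "\<dots> \<le> card {..<n - k}"
  proof (rule card_mono)
    show "{i. i < n \<and> xs ! i < m} \<subseteq> {..<n - k}"
    proof
      fix i assume "i \<in> {i. i < n \<and> xs ! i < m}"
      hence i: "i < n" "xs ! i < xs ! (n - k)" using mj by auto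
      { assume "n - k \<le> i"
        hence "xs ! (n - k) \<le> xs ! i" using sorted_nth_mono[OF sxs] i len by auto
        hence False using i by simp }
      thus "i \<in> {..<n - k}" by force
    qed
  qed simp
  finally show "card {i\<in>{..<n}. x i < m} \<le> n - k" by simp
  have "card {i\<in>{..<n}. x i > m} = card {i. i < n \<and> xs ! i > m}"
    unfolding xs_def by (rule card_filter_eq)
  also have "\<dots> \<le> card {n - k<..<n}"
  proof (rule card_mono)
    show "{i. i < n \<and> xs ! i > m} \<subseteq> {n - k<..<n}"
    proof
      fix i assume "i \<in> {i. i < n \<and> xs ! i > m}"
      hence i: "i < n" "xs ! i > xs ! (n - k)" using mj by auto
      { assume "i \<le> n - k"
        hence "xs ! i \<le> xs ! (n - k)" using sorted_nth_mono[OF sxs] kn k1 len by auto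
        hence False using i by simp }
      thus "i \<in> {n - k<..<n}" using i by force
    qed
  qed simp
  finally show "card {i\<in>{..<n}. x i > m} \<le> k - 1" using k1 kn by simp
qed

lemma card_split:
  "card {i\<in>{..<n::nat}. P i} + card {i\<in>{..<n}. \<not> P i} = n"
proof -
  have "card ({i\<in>{..<n::nat}. P i} \<union> {i\<in>{..<n}. \<not> P i}) = card {i\<in>{..<n::nat}. P i} + card {i\<in>{..<n}. \<not> P i}"
    by (rule card_Un_disjoint) auto
  moreover have "{i\<in>{..<n::nat}. P i} \<union> {i\<in>{..<n}. \<not> P i} = {..<n}" by auto
  ultimately show ?thesis by simp
qed

theorem mainTheorem3:
  fixes n :: nat and p :: real and x :: "nat \<Rightarrow> real"
  assumes "n \<ge> 2" and "p \<ge> 1"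
  shows "social_cost n p x (median_loc n x)
           \<le> 2 powr (1 - 1 / p) * (INF y. social_cost n p x y)"
proof -
  define k where "k = nat \<lceil>real n / 2\<rceil>"
  define m where "m = median_loc n x"
  have mk: "m = kth_largest n x k" unfolding m_def median_loc_def k_def ..
  have c0: "\<lceil>real n / 2\<rceil> \<ge> 0" by simp
  have kr: "real k = of_int \<lceil>real n / 2\<rceil>" unfolding k_def using c0 by simp
  have "real n / 2 \<le> real k" unfolding kr by (rule le_of_int_ceiling)
  hence nk: "n \<le> 2 * k" by linarith
  have "real k < real n / 2 + 1" unfolding kr using ceiling_correct[of "real n / 2"] by linarith
  hence kn2: "2 * k \<le> n + 1" by linarith
  have k1: "1 \<le> k" and kn: "k \<le> n" using nk kn2 assms(1) by auto
  note cnt = median_counts[OF k1 kn, of x, folded mk]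
  define c where "c = (2::real) powr (1 - 1 / p)"
  have cpos: "c > 0" unfolding c_def by simp
  have bound: "social_cost n p x m \<le> c * social_cost n p x y" for y
  proof -
    have S: "(\<Sum>i<n. \<bar>x i - m\<bar> powr p) \<le> 2 powr (p - 1) * (\<Sum>i<n. \<bar>x i - y\<bar> powr p)"
    proof (rule key[OF assms(2)])
      let ?B = "{i\<in>{..<n}. (x i - m) * (y - m) > 0}"
      let ?C = "{i\<in>{..<n}. \<not> (x i - m) * (y - m) > 0}"
      have sp: "card ?B + card ?C = n" by (rule card_split)
      have CC: "?C = {i\<in>{..<n}. (x i - m) * (y - m) \<le> 0}" by auto
      have "card ?B \<le> card ?C"
      proof (cases "y = m")
        case True thus ?thesis by simp
      next
        case False
        show ?thesis
        proof (cases "y > m")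
          case True
          have "?B = {i\<in>{..<n}. x i > m}" using True by (auto simp: zero_less_mult_iff)
          thus ?thesis using cnt(2) sp nk kn2 by simp
        next
          case F2: False
          hence "y < m" using False by simp
          hence "?B = {i\<in>{..<n}. x i < m}" by (auto simp: zero_less_mult_iff)
          thus ?thesis using cnt(1) sp nk kn2 by simp
        qed
      qed
      thus "card ?B \<le> card {i\<in>{..<n}. (x i - m) * (y - m) \<le> 0}" using CC by simp
    qed
    have nn: "(\<Sum>i<n. \<bar>x i - m\<bar> powr p) \<ge> 0" by (intro sum_nonneg) auto
    have nn2: "(\<Sum>i<n. \<bar>x i - y\<bar> powr p) \<ge> 0" by (intro sum_nonneg) auto
    have "social_cost n p x m = (\<Sum>i<n. \<bar>x i - m\<bar> powr p) powr (1 / p)"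
      by (simp add: social_cost_def)
    also have "\<dots> \<le> (2 powr (p - 1) * (\<Sum>i<n. \<bar>x i - y\<bar> powr p)) powr (1 / p)"
      using S nn assms(2) by (intro powr_mono2) auto
    also have "\<dots> = (2 powr (p - 1)) powr (1 / p) * (\<Sum>i<n. \<bar>x i - y\<bar> powr p) powr (1 / p)"
      using nn2 by (intro powr_mult)
    also have "(2 powr (p - 1)) powr (1 / p) = c"
      unfolding c_def powr_powr using assms(2) by (simp add: field_simps)
    finally show ?thesis by (simp add: social_cost_def)
  qed
  have "social_cost n p x m / c \<le> (INF y. social_cost n p x y)"
    using bound cpos by (intro cINF_greatest) (auto simp: field_simps mult.commute)
  hence "c * (social_cost n p x m / c) \<le> c * (INF y. social_cost n p x y)"
    using cpos by (intro mult_left_mono) auto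
  thus ?thesis using cpos unfolding m_def c_def by simp
qed

end
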